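(* Let $(R,\mathfrak m)$ be a noetherian local ring, $\nu$ a valuation centered on $R$, $\nu=\nu_1\circ\nu_2$ a decomposition with $\mathfrak p=\mathfrak C_{\nu_1}(R)$, and assume $I=\mathrm{Nil}(R)$ is the only associated prime ideal of $R$. Let $y_1,\ldots,y_r,y_{r+1},\ldots,y_{r+s}$ generate $\mathfrak p$ and let $b\in R\setminus\mathfrak p$. Let $\pi:R\to R^{(1)}$ be the local blowing up with respect to $\nu$ along $(b,y_1,\ldots,y_r)$, and set $y_i^{(1)}=\pi(y_i)/b$ for $1\le i\le r$ and $y^{(1)}_{r+k}=\pi(y_{r+k})$ for $1\le k\le s$. Then $\mathfrak p^{(1)}=\mathfrak C_{\nu_1}(R^{(1)})$ is generated by $y_1^{(1)},\ldots,y_{r+s}^{(1)}$.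
   Context: All rings are commutative noetherian with $1$; $\mathrm{Nil}(A)$ is the nilradical of $A$. A valuation on a ring $R$ is a map $\nu:R\to\Gamma\cup\{\infty\}$ ($\Gamma$ an ordered abelian group) with $\nu(ab)=\nu(a)+\nu(b)$, $\nu(a+b)\ge\min\{\nu(a),\nu(b)\}$, $\nu(1)=0$, $\nu(0)=\infty$, whose support $\mathrm{supp}(\nu)=\{a:\nu(a)=\infty\}$ is a minimal prime ideal; it extends to localizations at multiplicative sets disjoint from the support via $\nu(a/s)=\nu(a)-\nu(s)$ and restricts to subrings, implicitly. $\nu$ has a center on $R$ if $\nu\ge0$ on $R$; its center is $\mathfrak C_\nu(R)=\{a:\nu(a)>0\}$. $\nu$ is centered on $(R,\mathfrak m)$ if $\nu\ge0$ on $R$ and $\nu>0$ on $\mathfrak m$. $\nu R$ is the subgroup of $\Gamma$ generated by the finite values of $\nu$. Local blowing up: for $b\in R\setminus\mathrm{supp}(\nu)$ let $J(b)=\bigcup_{i\ge1}\mathrm{ann}_R(b^i)$, so $R/J(b)\subseteq R_b$. Given $a_1,\ldots,a_r\in R$ with $\nu(a_i)\ge\nu(b)$, let $R'=(R/J(b))[a_1/b,\ldots,a_r/b]\subseteq R_b$ and $R^{(1)}=R'_{\mathfrak C_\nu(R')}$; the canonical map $R\to R^{(1)}$ is the local blowing up of $R$ with respect to $\nu$ along $(b,a_1,\ldots,a_r)$. (Here $J(b)=0$ since $\mathrm{Nil}(R)$ is the only associated prime and $b\notin\mathrm{Nil}(R)$; also $\nu(y_i)>\nu(b)$ since $y_i\in\mathfrak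 p$, $b\notin\mathfrak p$.) Decomposition: let $\Delta$ be a convex subgroup of $\nu R$. Define $\nu_1(a)=\nu(a)+\Delta\in\nu R/\Delta$ (and $\infty$ if $\nu(a)=\infty$); $\nu_1$ is a valuation with a center on $R$, and $\mathfrak p=\mathfrak C_{\nu_1}(R)=\{a:\nu(a)>\delta\ \forall\delta\in\Delta\}$. Define $\nu_2$ on $R/\mathfrak p$ by $\nu_2(a+\mathfrak p)=\nu(a)$ for $a\notin\mathfrak p$, $\infty$ for $a\in\mathfrak p$. We write $\nu=\nu_1\circ\nu_2$. On a local blowing up of $R$ with respect to $\nu$, $\nu_1$ is defined by the same formula from the extension of $\nu$. *)

theory Defs
  imports "HOL-Algebra.Algebra"
begin

section \<open>Values: 'g option, with None playing the role of infinity\<close>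

definition vle :: "'g::linordered_ab_group_add option \<Rightarrow> 'g option \<Rightarrow> bool" where
  "vle x y = (case y of None \<Rightarrow> True | Some b \<Rightarrow> (case x of None \<Rightarrow> False | Some a \<Rightarrow> a \<le> b))"

definition vless :: "'g::linordered_ab_group_add option \<Rightarrow> 'g option \<Rightarrow> bool" where
  "vless x y = (vle x y \<and> x \<noteq> y)"

definition vadd :: "'g::linordered_ab_group_add option \<Rightarrow> 'g option \<Rightarrow> 'g option" where
  "vadd x y = (case (x, y) of (Some a, Some b) \<Rightarrow> Some (a + b) | _ \<Rightarrow> None)"

definition vsub :: "'g::linordered_ab_group_add option \<Rightarrow> 'g option \<Rightarrow> 'g option" where
  "vsub x y = (case (x, y) of (Some a, Some b) \<Rightarrow> Some (a - b) | _ \<Rightarrow> None)"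

definition nilradical :: "('a, 'b) ring_scheme \<Rightarrow> 'a set" where
  "nilradical R = {a \<in> carrier R. \<exists>n::nat. a [^]\<^bsub>R\<^esub> n = \<zero>\<^bsub>R\<^esub>}"

definition annihilator :: "('a, 'b) ring_scheme \<Rightarrow> 'a \<Rightarrow> 'a set" where
  "annihilator R x = {a \<in> carrier R. a \<otimes>\<^bsub>R\<^esub> x = \<zero>\<^bsub>R\<^esub>}"

definition associated_primes :: "('a, 'b) ring_scheme \<Rightarrow> 'a set set" where
  "associated_primes R = {P. primeideal P R \<and> (\<exists>x \<in> carrier R. P = annihilator R x)}"

definition minimal_prime :: "('a, 'b) ring_scheme \<Rightarrow> 'a set \<Rightarrow> bool" where
  "minimal_prime R P = (primeideal P R \<and> (\<forall>Q. primeideal Q R \<and> Q \<subseteq> P \<longrightarrow> Q = P))"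

definition local_ring :: "('a, 'b) ring_scheme \<Rightarrow> 'a set \<Rightarrow> bool" where
  "local_ring R m = (cring R \<and> maximalideal m R \<and> (\<forall>I. maximalideal I R \<longrightarrow> I = m))"

definition support :: "('a, 'b) ring_scheme \<Rightarrow> ('a \<Rightarrow> 'g::linordered_ab_group_add option) \<Rightarrow> 'a set" where
  "support R \<nu> = {a \<in> carrier R. \<nu> a = None}"

definition valuation :: "('a, 'b) ring_scheme \<Rightarrow> ('a \<Rightarrow> 'g::linordered_ab_group_add option) \<Rightarrow> bool" where
  "valuation R \<nu> =
    ((\<forall>a \<in> carrier R. \<forall>b \<in> carrier R. \<nu> (a \<otimes>\<^bsub>R\<^esub> b) = vadd (\<nu> a) (\<nu> b)) \<and>
     (\<forall>a \<in> carrier R. \<forall>b \<in> carrier R.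
        vle (\<nu> a) (\<nu> (a \<oplus>\<^bsub>R\<^esub> b)) \<or> vle (\<nu> b) (\<nu> (a \<oplus>\<^bsub>R\<^esub> b))) \<and>
     \<nu> \<one>\<^bsub>R\<^esub> = Some 0 \<and> \<nu> \<zero>\<^bsub>R\<^esub> = None \<and>
     minimal_prime R (support R \<nu>))"

definition has_center :: "('a, 'b) ring_scheme \<Rightarrow> ('a \<Rightarrow> 'g::linordered_ab_group_add option) \<Rightarrow> bool" where
  "has_center R \<nu> = (\<forall>a \<in> carrier R. vle (Some 0) (\<nu> a))"

definition centered_on :: "('a, 'b) ring_scheme \<Rightarrow> 'a set \<Rightarrow> ('a \<Rightarrow> 'g::linordered_ab_group_add option) \<Rightarrow> bool" where
  "centered_on R m \<nu> = (has_center R \<nu> \<and> (\<forall>a \<in> m. vless (Some 0) (\<nu> a)))"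

definition center :: "('a, 'b) ring_scheme \<Rightarrow> ('a \<Rightarrow> 'g::linordered_ab_group_add option) \<Rightarrow> 'a set" where
  "center R \<nu> = {a \<in> carrier R. vless (Some 0) (\<nu> a)}"

definition add_subgroup :: "'g::linordered_ab_group_add set \<Rightarrow> bool" where
  "add_subgroup H = (0 \<in> H \<and> (\<forall>x \<in> H. \<forall>y \<in> H. x - y \<in> H))"

definition value_group :: "('a, 'b) ring_scheme \<Rightarrow> ('a \<Rightarrow> 'g::linordered_ab_group_add option) \<Rightarrow> 'g set" where
  "value_group R \<nu> = \<Inter>{H. add_subgroup H \<and> {g. \<exists>a \<in> carrier R. \<nu> a = Some g} \<subseteq> H}"

definition convex_subgroup :: "'g::linordered_ab_group_add set \<Rightarrow> 'g set \<Rightarrow> bool" where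
  "convex_subgroup \<Delta> \<Gamma> = (add_subgroup \<Delta> \<and> \<Delta> \<subseteq> \<Gamma> \<and>
     (\<forall>\<delta> \<in> \<Delta>. \<forall>\<gamma> \<in> \<Gamma>. 0 \<le> \<gamma> \<and> \<gamma> \<le> \<delta> \<longrightarrow> \<gamma> \<in> \<Delta>))"

text \<open>Center of nu_1 (nu_1(a) = nu(a) + Delta) on a ring A:
  C_{nu_1}(A) = {a. nu(a) > delta for all delta in Delta}.\<close>
definition center1 :: "('a, 'b) ring_scheme \<Rightarrow> ('a \<Rightarrow> 'g::linordered_ab_group_add option) \<Rightarrow> 'g set \<Rightarrow> 'a set" where
  "center1 R \<nu> \<Delta> = {a \<in> carrier R. \<forall>\<delta> \<in> \<Delta>. vless (Some \<delta>) (\<nu> a)}"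

definition loc_rel :: "('a, 'b) ring_scheme \<Rightarrow> 'a set \<Rightarrow> (('a \<times> 'a) \<times> ('a \<times> 'a)) set" where
  "loc_rel A S = {((a, s), (a', s')). a \<in> carrier A \<and> s \<in> S \<and> a' \<in> carrier A \<and> s' \<in> S \<and>
      (\<exists>u \<in> S. u \<otimes>\<^bsub>A\<^esub> ((a \<otimes>\<^bsub>A\<^esub> s') \<oplus>\<^bsub>A\<^esub> (\<ominus>\<^bsub>A\<^esub> (a' \<otimes>\<^bsub>A\<^esub> s))) = \<zero>\<^bsub>A\<^esub>)}"

definition frac :: "('a, 'b) ring_scheme \<Rightarrow> 'a set \<Rightarrow> 'a \<Rightarrow> 'a \<Rightarrow> ('a \<times> 'a) set" where
  "frac A S a s = loc_rel A S `` {(a, s)}"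

definition loc_rep :: "('a \<times> 'a) set \<Rightarrow> 'a \<times> 'a" where
  "loc_rep U = (SOME p. p \<in> U)"

definition localization :: "('a, 'b) ring_scheme \<Rightarrow> 'a set \<Rightarrow> ('a \<times> 'a) set ring" where
  "localization A S =
    \<lparr>carrier = (carrier A \<times> S) // loc_rel A S,
     monoid.mult = (\<lambda>U V. frac A S (fst (loc_rep U) \<otimes>\<^bsub>A\<^esub> fst (loc_rep V))
                               (snd (loc_rep U) \<otimes>\<^bsub>A\<^esub> snd (loc_rep V))),
     monoid.one = frac A S \<one>\<^bsub>A\<^esub> \<one>\<^bsub>A\<^esub>,
     ring.zero = frac A S \<zero>\<^bsub>A\<^esub> \<one>\<^bsub>A\<^esub>,
     ring.add = (\<lambda>U V. frac A S ((fst (loc_rep U) \<otimes>\<^bsub>A\<^esub> snd (loc_rep V)) \<oplus>\<^bsub>A\<^esub>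
                                 (fst (loc_rep V) \<otimes>\<^bsub>A\<^esub> snd (loc_rep U)))
                               (snd (loc_rep U) \<otimes>\<^bsub>A\<^esub> snd (loc_rep V)))\<rparr>"

definition loc_val :: "('a \<Rightarrow> 'g::linordered_ab_group_add option) \<Rightarrow> ('a \<times> 'a) set \<Rightarrow> 'g option" where
  "loc_val \<nu> U = vsub (\<nu> (fst (loc_rep U))) (\<nu> (snd (loc_rep U)))"

definition powers :: "('a, 'b) ring_scheme \<Rightarrow> 'a \<Rightarrow> 'a set" where
  "powers A b = {b [^]\<^bsub>A\<^esub> (n::nat) | n. True}"

text \<open>R' = (R/J(b))[a_1/b, ..., a_r/b], realised as the subring of R_b generated by
  the image of R (which is R/J(b)) and the fractions a_i/b.\<close>
definition blowup_aff :: "('a, 'b) ring_scheme \<Rightarrow> 'a \<Rightarrow> 'a set \<Rightarrow> ('a \<times> 'a) set ring" where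
  "blowup_aff A b as =
    (localization A (powers A b))
      \<lparr>carrier := generate_ring (localization A (powers A b))
         ((\<lambda>a. frac A (powers A b) a \<one>\<^bsub>A\<^esub>) ` carrier A \<union> (\<lambda>a. frac A (powers A b) a b) ` as)\<rparr>"

definition blowup :: "('a, 'b) ring_scheme \<Rightarrow> ('a \<Rightarrow> 'g::linordered_ab_group_add option) \<Rightarrow> 'a \<Rightarrow> 'a set
    \<Rightarrow> (('a \<times> 'a) set \<times> ('a \<times> 'a) set) set ring" where
  "blowup A \<nu> b as = localization (blowup_aff A b as)
      (carrier (blowup_aff A b as) - center (blowup_aff A b as) (loc_val \<nu>))"

definition blowup_val :: "('a \<Rightarrow> 'g::linordered_ab_group_add option) \<Rightarrow> (('a \<times> 'a) set \<times> ('a \<times> 'a) set) set \<Rightarrow> 'g option" where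
  "blowup_val \<nu> = loc_val (loc_val \<nu>)"

definition blowup_incl :: "('a, 'b) ring_scheme \<Rightarrow> ('a \<Rightarrow> 'g::linordered_ab_group_add option) \<Rightarrow> 'a \<Rightarrow> 'a set
    \<Rightarrow> ('a \<times> 'a) set \<Rightarrow> (('a \<times> 'a) set \<times> ('a \<times> 'a) set) set" where
  "blowup_incl A \<nu> b as x = frac (blowup_aff A b as)
      (carrier (blowup_aff A b as) - center (blowup_aff A b as) (loc_val \<nu>)) x \<one>\<^bsub>blowup_aff A b as\<^esub>"

definition blowup_map :: "('a, 'b) ring_scheme \<Rightarrow> ('a \<Rightarrow> 'g::linordered_ab_group_add option) \<Rightarrow> 'a \<Rightarrow> 'a set
    \<Rightarrow> 'a \<Rightarrow> (('a \<times> 'a) set \<times> ('a \<times> 'a) set) set" where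
  "blowup_map A \<nu> b as a = blowup_incl A \<nu> b as (frac A (powers A b) a \<one>\<^bsub>A\<^esub>)"

end

theory Submission
  imports Defs
begin


lemma (in cring) my_idealI:
  assumes "I \<subseteq> carrier R" "\<zero> \<in> I" "\<And>a b. a \<in> I \<Longrightarrow> b \<in> I \<Longrightarrow> a \<oplus> b \<in> I"
    "\<And>a. a \<in> I \<Longrightarrow> \<ominus> a \<in> I" "\<And>a x. a \<in> I \<Longrightarrow> x \<in> carrier R \<Longrightarrow> x \<otimes> a \<in> I"
  shows "ideal I R"
proof (rule idealI)
  show "ring R" by (rule ring_axioms)
  show "subgroup I (add_monoid R)"
    apply (rule group.subgroupI[OF a_group])
    using assms by (auto simp: a_inv_def[symmetric])
  show "\<And>a x. a \<in> I \<Longrightarrow> x \<in> carrier R \<Longrightarrow> x \<otimes> a \<in> I" by fact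
  show "\<And>a x. a \<in> I \<Longrightarrow> x \<in> carrier R \<Longrightarrow> a \<otimes> x \<in> I"
    using assms(1,5) m_comm by (metis subsetD)
qed

lemma vle_None[simp]: "vle x None" "vle None y \<longleftrightarrow> y = None"
  by (auto simp: vle_def split: option.splits)
lemma vle_Some[simp]: "vle (Some a) (Some b) \<longleftrightarrow> a \<le> b" "vle (Some a) y \<longleftrightarrow> (\<forall>c. y = Some c \<longrightarrow> a \<le> c)"
  by (auto simp: vle_def split: option.splits)
lemma vadd_simps[simp]: "vadd None y = None" "vadd x None = None" "vadd (Some a) (Some b) = Some (a+b)"
  by (auto simp: vadd_def split: option.splits)
lemma vsub_simps[simp]: "vsub None y = None" "vsub x None = None" "vsub (Some a) (Some b) = Some (a-b)"
  by (auto simp: vsub_def split: option.splits)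
lemma vless_iff: "vless x y \<longleftrightarrow> vle x y \<and> x \<noteq> y" by (simp add: vless_def)

lemma vle_trans: "vle x y \<Longrightarrow> vle y z \<Longrightarrow> vle x z"
  by (auto simp: vle_def split: option.splits)
lemma vle_antisym: "vle x y \<Longrightarrow> vle y x \<Longrightarrow> x = y"
  by (auto simp: vle_def split: option.splits)
lemma vle_total: "vle x y \<or> vle y x"
  by (auto simp: vle_def split: option.splits)
lemma vle_refl[simp]: "vle x x"
  by (auto simp: vle_def split: option.splits)
lemma vadd_mono: "vle x y \<Longrightarrow> vle (vadd x z) (vadd y z)"
  by (auto simp: vle_def vadd_def split: option.splits)
lemma vadd_assoc: "vadd (vadd x y) z = vadd x (vadd y z)"
  by (auto simp: vadd_def ac_simps split: option.splits)
lemma vadd_comm: "vadd x y = vadd y x"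
  by (auto simp: vadd_def ac_simps split: option.splits)
lemma vle_vsub: "vle c (vsub x (Some s)) \<longleftrightarrow> vle (vadd c (Some s)) x"
  by (auto simp: vle_def vadd_def vsub_def le_diff_eq split: option.splits)
lemma vless_vsub: "vless c (vsub x (Some s)) \<longleftrightarrow> vless (vadd c (Some s)) x"
  by (auto simp: vless_def vle_def vadd_def vsub_def le_diff_eq split: option.splits)
lemma vsub_zero[simp]: "vsub x (Some 0) = x"
  by (auto simp: vsub_def split: option.splits)
lemma vadd_zero[simp]: "vadd x (Some 0) = x" "vadd (Some 0) x = x"
  by (auto simp: vadd_def split: option.splits)
lemma vless_trans1: "vle x y \<Longrightarrow> vless y z \<Longrightarrow> vless x z"
  by (auto simp: vless_def vle_def split: option.splits)
lemma vless_trans2: "vless x y \<Longrightarrow> vle y z \<Longrightarrow> vless x z"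
  by (auto simp: vless_def vle_def split: option.splits)
lemma vless_None: "vless (Some a) None" by (simp add: vless_def)



locale mset = cring A for A (structure) +
  fixes S assumes S_sub: "S \<subseteq> carrier A" and one_S: "\<one> \<in> S"
    and mult_S: "\<lbrakk>s \<in> S; t \<in> S\<rbrakk> \<Longrightarrow> s \<otimes> t \<in> S"
begin

lemma S_carr: "s \<in> S \<Longrightarrow> s \<in> carrier A" using S_sub by auto

lemma minus0_iff: "x \<in> carrier A \<Longrightarrow> y \<in> carrier A \<Longrightarrow> (x \<oplus> \<ominus> y = \<zero>) = (x = y)"
proof
  assume c: "x \<in> carrier A" "y \<in> carrier A" and h: "x \<oplus> \<ominus> y = \<zero>"
  have "x = (x \<oplus> \<ominus> y) \<oplus> y" using c by algebra
  then show "x = y" using h c by simp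
qed (simp add: r_neg)

lemma rel_iff: "((a,s),(a',s')) \<in> loc_rel A S \<longleftrightarrow> a \<in> carrier A \<and> s \<in> S \<and> a' \<in> carrier A \<and> s' \<in> S \<and>
      (\<exists>u \<in> S. u \<otimes> (a \<otimes> s') = u \<otimes> (a' \<otimes> s))"
proof -
  have "u \<otimes> ((a \<otimes> s') \<oplus> (\<ominus> (a' \<otimes> s))) = \<zero> \<longleftrightarrow> u \<otimes> (a \<otimes> s') = u \<otimes> (a' \<otimes> s)"
    if "a \<in> carrier A" "s \<in> S" "a' \<in> carrier A" "s' \<in> S" "u \<in> S" for u
  proof -
    have c: "s \<in> carrier A" "s' \<in> carrier A" "u \<in> carrier A" using that S_carr by auto
    have "u \<otimes> ((a \<otimes> s') \<oplus> (\<ominus> (a' \<otimes> s))) = u \<otimes> (a \<otimes> s') \<oplus> \<ominus> (u \<otimes> (a' \<otimes> s))"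
      using c that by algebra
    then show ?thesis using c that minus0_iff by simp
  qed
  then show ?thesis unfolding loc_rel_def by auto
qed

lemma rel_equiv: "equiv (carrier A \<times> S) (loc_rel A S)"
proof (rule equivI)
  show "loc_rel A S \<subseteq> (carrier A \<times> S) \<times> (carrier A \<times> S)" by (auto simp: loc_rel_def)
  show "refl_on (carrier A \<times> S) (loc_rel A S)"
  proof (rule refl_onI)
    fix x assume "x \<in> carrier A \<times> S"
    then show "(x,x) \<in> loc_rel A S" using one_S by (auto simp: rel_iff)
  qed
  show "sym (loc_rel A S)"
    by (rule symI) (clarsimp simp: rel_iff, metis)
  show "trans (loc_rel A S)"
  proof (rule transI)
    fix x y z assume "(x,y) \<in> loc_rel A S" "(y,z) \<in> loc_rel A S"
    then obtain a s a' s' a'' s'' u v where xy: "x = (a,s)" "y = (a',s')" "z = (a'',s'')" "a \<in> carrier A" "s \<in> S" "a' \<in> carrier A" "s' \<in> S"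
      "a'' \<in> carrier A" "s'' \<in> S"
      "u \<in> S" "u \<otimes> (a \<otimes> s') = u \<otimes> (a' \<otimes> s)"
      "v \<in> S" "v \<otimes> (a' \<otimes> s'') = v \<otimes> (a'' \<otimes> s')"
      by (cases x, cases y, cases z) (auto simp: rel_iff)
    have c: "u \<in> carrier A" "v \<in> carrier A" "s \<in> carrier A" "s' \<in> carrier A" "s'' \<in> carrier A"
      using xy S_carr by auto
    have "(u \<otimes> v \<otimes> s') \<otimes> (a \<otimes> s'') = (v \<otimes> s'') \<otimes> (u \<otimes> (a \<otimes> s'))"
      using xy(4-9) c by (simp add: m_ac)
    also have "\<dots> = (v \<otimes> s'') \<otimes> (u \<otimes> (a' \<otimes> s))" by (simp only: xy(11))
    also have "\<dots> = (u \<otimes> s) \<otimes> (v \<otimes> (a' \<otimes> s''))" using xy(4-9) c by (simp add: m_ac)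
    also have "\<dots> = (u \<otimes> s) \<otimes> (v \<otimes> (a'' \<otimes> s'))" by (simp only: xy(13))
    also have "\<dots> = (u \<otimes> v \<otimes> s') \<otimes> (a'' \<otimes> s)" using xy(4-9) c by (simp add: m_ac)
    finally have "(u \<otimes> v \<otimes> s') \<otimes> (a \<otimes> s'') = (u \<otimes> v \<otimes> s') \<otimes> (a'' \<otimes> s)" .
    moreover have "u \<otimes> v \<otimes> s' \<in> S" using xy mult_S by auto
    ultimately show "(x,z) \<in> loc_rel A S" unfolding xy(1) xy(3) rel_iff using xy by blast
  qed
qed

abbreviation "L \<equiv> localization A S"

lemma frac_eq_iff: "a \<in> carrier A \<Longrightarrow> s \<in> S \<Longrightarrow> a' \<in> carrier A \<Longrightarrow> s' \<in> S \<Longrightarrow>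
   frac A S a s = frac A S a' s' \<longleftrightarrow> ((a,s),(a',s')) \<in> loc_rel A S"
  unfolding frac_def by (rule eq_equiv_class_iff[OF rel_equiv]) auto

lemma frac_eqI: "a \<in> carrier A \<Longrightarrow> s \<in> S \<Longrightarrow> a' \<in> carrier A \<Longrightarrow> s' \<in> S \<Longrightarrow>
   a \<otimes> s' = a' \<otimes> s \<Longrightarrow> frac A S a s = frac A S a' s'"
  apply (subst frac_eq_iff, assumption+)
  unfolding rel_iff using S_carr one_S by auto

lemma rel_refl: "a \<in> carrier A \<Longrightarrow> s \<in> S \<Longrightarrow> ((a,s),(a,s)) \<in> loc_rel A S"
  unfolding rel_iff using one_S by auto

lemma frac_carrier: "a \<in> carrier A \<Longrightarrow> s \<in> S \<Longrightarrow> frac A S a s \<in> carrier L"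
  unfolding localization_def frac_def by (auto intro: quotientI)

lemma carrier_frac: "U \<in> carrier L \<Longrightarrow> \<exists>a s. a \<in> carrier A \<and> s \<in> S \<and> U = frac A S a s"
  unfolding localization_def frac_def by (auto elim!: quotientE)

lemma rep_frac: "a \<in> carrier A \<Longrightarrow> s \<in> S \<Longrightarrow>
   ((a,s), loc_rep (frac A S a s)) \<in> loc_rel A S"
proof -
  assume as: "a \<in> carrier A" "s \<in> S"
  have "(a,s) \<in> frac A S a s" unfolding frac_def
    using rel_refl as by auto
  then have "loc_rep (frac A S a s) \<in> frac A S a s" unfolding loc_rep_def by (rule someI)
  then show ?thesis by (simp add: frac_def)
qed

lemma rep_frac': "a \<in> carrier A \<Longrightarrow> s \<in> S \<Longrightarrow>
   fst (loc_rep (frac A S a s)) \<in> carrier A \<and> snd (loc_rep (frac A S a s)) \<in> S \<and>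
   ((a,s), (fst (loc_rep (frac A S a s)), snd (loc_rep (frac A S a s)))) \<in> loc_rel A S"
  using rep_frac[of a s] by (cases "loc_rep (frac A S a s)") (auto simp: rel_iff)

lemma mult_compat:
  assumes "((a,s),(a1,s1)) \<in> loc_rel A S" "((c,t),(c1,t1)) \<in> loc_rel A S"
  shows "((a \<otimes> c, s \<otimes> t),(a1 \<otimes> c1, s1 \<otimes> t1)) \<in> loc_rel A S"
proof -
  obtain u v where xy: "a \<in> carrier A" "s \<in> S" "a1 \<in> carrier A" "s1 \<in> S"
      "c \<in> carrier A" "t \<in> S" "c1 \<in> carrier A" "t1 \<in> S"
      "u \<in> S" "u \<otimes> (a \<otimes> s1) = u \<otimes> (a1 \<otimes> s)"
      "v \<in> S" "v \<otimes> (c \<otimes> t1) = v \<otimes> (c1 \<otimes> t)"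
    using assms by (auto simp: rel_iff)
  have c: "u \<in> carrier A" "v \<in> carrier A" "s \<in> carrier A" "s1 \<in> carrier A" "t \<in> carrier A" "t1 \<in> carrier A"
    using xy S_carr by auto
  have "(u \<otimes> v) \<otimes> ((a \<otimes> c) \<otimes> (s1 \<otimes> t1)) = (u \<otimes> (a \<otimes> s1)) \<otimes> (v \<otimes> (c \<otimes> t1))"
    using xy(1,3,5,7) c by (simp add: m_ac)
  also have "\<dots> = (u \<otimes> (a1 \<otimes> s)) \<otimes> (v \<otimes> (c1 \<otimes> t))" by (simp only: xy(10) xy(12))
  also have "\<dots> = (u \<otimes> v) \<otimes> ((a1 \<otimes> c1) \<otimes> (s \<otimes> t))" using xy(1,3,5,7) c by (simp add: m_ac)
  finally have eq: "(u \<otimes> v) \<otimes> ((a \<otimes> c) \<otimes> (s1 \<otimes> t1)) = (u \<otimes> v) \<otimes> ((a1 \<otimes> c1) \<otimes> (s \<otimes> t))" .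
  have "u \<otimes> v \<in> S" "s \<otimes> t \<in> S" "s1 \<otimes> t1 \<in> S" using xy mult_S by auto
  then show ?thesis unfolding rel_iff using xy c eq by blast
qed

lemma add_compat:
  assumes "((a,s),(a1,s1)) \<in> loc_rel A S" "((c,t),(c1,t1)) \<in> loc_rel A S"
  shows "(((a \<otimes> t) \<oplus> (c \<otimes> s), s \<otimes> t),((a1 \<otimes> t1) \<oplus> (c1 \<otimes> s1), s1 \<otimes> t1)) \<in> loc_rel A S"
proof -
  obtain u v where xy: "a \<in> carrier A" "s \<in> S" "a1 \<in> carrier A" "s1 \<in> S"
      "c \<in> carrier A" "t \<in> S" "c1 \<in> carrier A" "t1 \<in> S"
      "u \<in> S" "u \<otimes> (a \<otimes> s1) = u \<otimes> (a1 \<otimes> s)"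
      "v \<in> S" "v \<otimes> (c \<otimes> t1) = v \<otimes> (c1 \<otimes> t)"
    using assms by (auto simp: rel_iff)
  have c: "u \<in> carrier A" "v \<in> carrier A" "s \<in> carrier A" "s1 \<in> carrier A" "t \<in> carrier A" "t1 \<in> carrier A"
    using xy S_carr by auto
  have "(u \<otimes> v) \<otimes> (((a \<otimes> t) \<oplus> (c \<otimes> s)) \<otimes> (s1 \<otimes> t1)) =
     (v \<otimes> t \<otimes> t1) \<otimes> (u \<otimes> (a \<otimes> s1)) \<oplus> (u \<otimes> s \<otimes> s1) \<otimes> (v \<otimes> (c \<otimes> t1))"
    using xy(1,3,5,7) c by (simp add: m_ac l_distr r_distr)
  also have "\<dots> = (v \<otimes> t \<otimes> t1) \<otimes> (u \<otimes> (a1 \<otimes> s)) \<oplus> (u \<otimes> s \<otimes> s1) \<otimes> (v \<otimes> (c1 \<otimes> t))"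
    by (simp only: xy(10) xy(12))
  also have "\<dots> = (u \<otimes> v) \<otimes> (((a1 \<otimes> t1) \<oplus> (c1 \<otimes> s1)) \<otimes> (s \<otimes> t))"
    using xy(1,3,5,7) c by (simp add: m_ac l_distr r_distr a_comm)
  finally have eq: "(u \<otimes> v) \<otimes> (((a \<otimes> t) \<oplus> (c \<otimes> s)) \<otimes> (s1 \<otimes> t1)) = (u \<otimes> v) \<otimes> (((a1 \<otimes> t1) \<oplus> (c1 \<otimes> s1)) \<otimes> (s \<otimes> t))" .
  have "u \<otimes> v \<in> S" "s \<otimes> t \<in> S" "s1 \<otimes> t1 \<in> S" using xy mult_S by auto
  then show ?thesis unfolding rel_iff using xy c eq by blast
qed

lemma mult_frac: "a \<in> carrier A \<Longrightarrow> s \<in> S \<Longrightarrow> c \<in> carrier A \<Longrightarrow> t \<in> S \<Longrightarrow>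
  frac A S a s \<otimes>\<^bsub>L\<^esub> frac A S c t = frac A S (a \<otimes> c) (s \<otimes> t)"
  apply (simp add: localization_def)
  apply (rule sym)
  apply (subst frac_eq_iff)
  using rep_frac'[of a s] rep_frac'[of c t] mult_S
  by (auto intro: mult_compat)

lemma add_frac: "a \<in> carrier A \<Longrightarrow> s \<in> S \<Longrightarrow> c \<in> carrier A \<Longrightarrow> t \<in> S \<Longrightarrow>
  frac A S a s \<oplus>\<^bsub>L\<^esub> frac A S c t = frac A S ((a \<otimes> t) \<oplus> (c \<otimes> s)) (s \<otimes> t)"
  apply (simp add: localization_def)
  apply (rule sym)
  apply (subst frac_eq_iff)
  using rep_frac'[of a s] rep_frac'[of c t] mult_S S_carr
  by (auto intro: add_compat)

lemma one_L: "\<one>\<^bsub>L\<^esub> = frac A S \<one> \<one>" by (simp add: localization_def)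
lemma zero_L: "\<zero>\<^bsub>L\<^esub> = frac A S \<zero> \<one>" by (simp add: localization_def)

lemma frac_cases:
  assumes "x \<in> carrier L" obtains a s where "a \<in> carrier A" "s \<in> S" "x = frac A S a s"
  using carrier_frac[OF assms] by blast

lemmas SS = mult_S S_carr one_S

lemma L_cring: "cring L"
proof (rule cringI)
  show "abelian_group L"
  proof (rule abelian_groupI)
    fix x y assume "x \<in> carrier L" "y \<in> carrier L"
    then show "x \<oplus>\<^bsub>L\<^esub> y \<in> carrier L"
      by (elim frac_cases) (simp add: add_frac frac_carrier SS)
  next
    show "\<zero>\<^bsub>L\<^esub> \<in> carrier L" by (simp add: zero_L frac_carrier SS)
  next
    fix x y z assume "x \<in> carrier L" "y \<in> carrier L" "z \<in> carrier L"
    then show "x \<oplus>\<^bsub>L\<^esub> y \<oplus>\<^bsub>L\<^esub> z = x \<oplus>\<^bsub>L\<^esub> (y \<oplus>\<^bsub>L\<^esub> z)"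
      by (elim frac_cases) (simp add: add_frac SS, rule frac_eqI, simp_all add: SS m_ac a_ac l_distr r_distr)
  next
    fix x y assume "x \<in> carrier L" "y \<in> carrier L"
    then show "x \<oplus>\<^bsub>L\<^esub> y = y \<oplus>\<^bsub>L\<^esub> x"
      by (elim frac_cases) (simp add: add_frac SS, rule frac_eqI, simp_all add: SS m_ac a_ac l_distr r_distr)
  next
    fix x assume "x \<in> carrier L"
    then show "\<zero>\<^bsub>L\<^esub> \<oplus>\<^bsub>L\<^esub> x = x"
      by (elim frac_cases) (simp add: zero_L add_frac SS)
  next
    fix x assume "x \<in> carrier L"
    then obtain a s where as: "a \<in> carrier A" "s \<in> S" "x = frac A S a s" by (rule frac_cases)
    have "frac A S (\<ominus> a) s \<oplus>\<^bsub>L\<^esub> x = frac A S ((\<ominus> a) \<otimes> s \<oplus> a \<otimes> s) (s \<otimes> s)"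
      using as by (simp add: add_frac SS)
    also have "\<dots> = frac A S \<zero> \<one>"
      using as by (intro frac_eqI) (simp_all add: SS l_minus l_neg)
    finally have "frac A S (\<ominus> a) s \<oplus>\<^bsub>L\<^esub> x = \<zero>\<^bsub>L\<^esub>" by (simp add: zero_L)
    then show "\<exists>y\<in>carrier L. y \<oplus>\<^bsub>L\<^esub> x = \<zero>\<^bsub>L\<^esub>" using as frac_carrier by blast
  qed
next
  show "comm_monoid L"
  proof (rule comm_monoidI)
    fix x y assume "x \<in> carrier L" "y \<in> carrier L"
    then show "x \<otimes>\<^bsub>L\<^esub> y \<in> carrier L"
      by (elim frac_cases) (simp add: mult_frac frac_carrier SS)
  next
    show "\<one>\<^bsub>L\<^esub> \<in> carrier L" by (simp add: one_L frac_carrier SS)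
  next
    fix x y z assume "x \<in> carrier L" "y \<in> carrier L" "z \<in> carrier L"
    then show "x \<otimes>\<^bsub>L\<^esub> y \<otimes>\<^bsub>L\<^esub> z = x \<otimes>\<^bsub>L\<^esub> (y \<otimes>\<^bsub>L\<^esub> z)"
      by (elim frac_cases) (simp add: mult_frac SS m_assoc)
  next
    fix x assume "x \<in> carrier L"
    then show "\<one>\<^bsub>L\<^esub> \<otimes>\<^bsub>L\<^esub> x = x"
      by (elim frac_cases) (simp add: one_L mult_frac SS)
  next
    fix x y assume "x \<in> carrier L" "y \<in> carrier L"
    then show "x \<otimes>\<^bsub>L\<^esub> y = y \<otimes>\<^bsub>L\<^esub> x"
      by (elim frac_cases) (simp add: mult_frac SS m_comm)
  qed
next
  fix x y z assume "x \<in> carrier L" "y \<in> carrier L" "z \<in> carrier L"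
  then show "(x \<oplus>\<^bsub>L\<^esub> y) \<otimes>\<^bsub>L\<^esub> z = x \<otimes>\<^bsub>L\<^esub> z \<oplus>\<^bsub>L\<^esub> y \<otimes>\<^bsub>L\<^esub> z"
    by (elim frac_cases) (simp add: add_frac mult_frac SS, rule frac_eqI, simp_all add: SS m_ac a_ac l_distr r_distr)
qed

end


definition vl :: "('a, 'b) ring_scheme \<Rightarrow> ('a \<Rightarrow> 'g::linordered_ab_group_add option) \<Rightarrow> bool" where
  "vl A \<nu> = ((\<forall>a\<in>carrier A. \<forall>b\<in>carrier A. \<nu> (a \<otimes>\<^bsub>A\<^esub> b) = vadd (\<nu> a) (\<nu> b)) \<and>
     (\<forall>c. \<forall>a\<in>carrier A. \<forall>b\<in>carrier A. vle c (\<nu> a) \<and> vle c (\<nu> b) \<longrightarrow> vle c (\<nu> (a \<oplus>\<^bsub>A\<^esub> b))) \<and>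
     \<nu> \<one>\<^bsub>A\<^esub> = Some 0 \<and> \<nu> \<zero>\<^bsub>A\<^esub> = None)"

lemma valuation_vl: "valuation R \<nu> \<Longrightarrow> vl R \<nu>"
  unfolding valuation_def vl_def by (meson vle_trans)

lemma vl_mult: "vl A \<nu> \<Longrightarrow> a \<in> carrier A \<Longrightarrow> b \<in> carrier A \<Longrightarrow> \<nu> (a \<otimes>\<^bsub>A\<^esub> b) = vadd (\<nu> a) (\<nu> b)"
  by (simp add: vl_def)
lemma vl_add: "vl A \<nu> \<Longrightarrow> a \<in> carrier A \<Longrightarrow> b \<in> carrier A \<Longrightarrow> vle c (\<nu> a) \<Longrightarrow> vle c (\<nu> b) \<Longrightarrow> vle c (\<nu> (a \<oplus>\<^bsub>A\<^esub> b))"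
  by (simp add: vl_def)
lemma vl_one: "vl A \<nu> \<Longrightarrow> \<nu> \<one>\<^bsub>A\<^esub> = Some 0" by (simp add: vl_def)
lemma vl_zero: "vl A \<nu> \<Longrightarrow> \<nu> \<zero>\<^bsub>A\<^esub> = None" by (simp add: vl_def)

lemma vl_addless: assumes "vl A \<nu>" "a \<in> carrier A" "b \<in> carrier A" "vless c (\<nu> a)" "vless c (\<nu> b)"
  shows "vless c (\<nu> (a \<oplus>\<^bsub>A\<^esub> b))"
proof -
  define m where "m = (if vle (\<nu> a) (\<nu> b) then \<nu> a else \<nu> b)"
  have "vle m (\<nu> a)" "vle m (\<nu> b)" "vless c m" using assms(4,5) vle_total unfolding m_def by auto
  then show ?thesis using vl_add[OF assms(1-3)] vless_trans2 by blast
qed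

lemma double_zero_g: "(x::'g::linordered_ab_group_add) + x = 0 \<Longrightarrow> x = 0"
proof (rule ccontr)
  assume h: "x + x = 0" "x \<noteq> 0"
  then consider "x < 0" | "x > 0" by fastforce
  then show False
  proof cases
    case 1 then have "x + x < 0" by (simp add: add_neg_neg) then show False using h by simp
  next
    case 2 then have "x + x > 0" by (simp add: add_pos_pos) then show False using h by simp
  qed
qed

lemma (in cring) vl_neg: assumes "vl R \<nu>" "a \<in> carrier R" shows "\<nu> (\<ominus> a) = \<nu> a"
proof -
  have "\<nu> (\<ominus> \<one>) = Some 0"
  proof -
    have "(\<ominus> \<one>) \<otimes> (\<ominus> \<one>) = \<one>" by algebra
    then have "\<nu> ((\<ominus> \<one>) \<otimes> (\<ominus> \<one>)) = Some 0" using vl_one[OF assms(1)] by simp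
    then have "vadd (\<nu> (\<ominus> \<one>)) (\<nu> (\<ominus> \<one>)) = Some 0" using vl_mult[OF assms(1)] by simp
    then show ?thesis by (cases "\<nu> (\<ominus> \<one>)") (auto intro: double_zero_g)
  qed
  moreover have "\<ominus> a = (\<ominus> \<one>) \<otimes> a" using assms(2) by algebra
  ultimately show ?thesis using vl_mult[OF assms(1)] assms(2) by simp
qed

lemma vl_subring: "vl A \<nu> \<Longrightarrow> H \<subseteq> carrier A \<Longrightarrow> vl (A\<lparr>carrier := H\<rparr>) \<nu>"
  unfolding vl_def by (simp; blast)

lemma vadd_cancel: "vadd (Some k) x = vadd (Some k) y \<Longrightarrow> x = y"
  by (cases x; cases y) auto
lemma vcross: "vadd x (Some t2) = vadd y (Some t1) \<Longrightarrow> vsub y (Some t2) = vsub x (Some t1)"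
  by (cases x; cases y) (auto simp: algebra_simps)
lemma vsub_vadd: "vsub (vadd x y) (Some (p+q)) = vadd (vsub x (Some p)) (vsub y (Some q))"
  by (cases x; cases y) (auto simp: algebra_simps)

context mset begin

lemma loc_val_frac:
  assumes "vl A \<nu>" "\<forall>s\<in>S. \<nu> s \<noteq> None" "a \<in> carrier A" "s \<in> S"
  shows "loc_val \<nu> (frac A S a s) = vsub (\<nu> a) (\<nu> s)"
proof -
  define p where "p = loc_rep (frac A S a s)"
  have p: "fst p \<in> carrier A" "snd p \<in> S" "((a,s),(fst p, snd p)) \<in> loc_rel A S"
    using rep_frac'[OF assms(3,4)] unfolding p_def by auto
  then obtain u where u: "u \<in> S" "u \<otimes> (a \<otimes> snd p) = u \<otimes> (fst p \<otimes> s)" unfolding rel_iff by blast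
  obtain k where k: "\<nu> u = Some k" using assms(2) u(1) by auto
  have "vadd (\<nu> u) (\<nu> (a \<otimes> snd p)) = vadd (\<nu> u) (\<nu> (fst p \<otimes> s))"
    using u p assms(3,4) vl_mult[OF assms(1)] S_carr by (metis m_closed)
  then have "\<nu> (a \<otimes> snd p) = \<nu> (fst p \<otimes> s)" using k vadd_cancel by metis
  then have e: "vadd (\<nu> a) (\<nu> (snd p)) = vadd (\<nu> (fst p)) (\<nu> s)"
    using vl_mult[OF assms(1)] p assms(3,4) S_carr by metis
  obtain t1 t2 where t: "\<nu> s = Some t1" "\<nu> (snd p) = Some t2" using assms(2) assms(4) p(2) by blast
  show ?thesis unfolding loc_val_def p_def[symmetric] using vcross[of "\<nu> a" t2 "\<nu> (fst p)" t1] e t by simp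
qed

lemma loc_vl:
  assumes "vl A \<nu>" "\<forall>s\<in>S. \<nu> s \<noteq> None"
  shows "vl L (loc_val \<nu>)"
  unfolding vl_def
proof (intro conjI ballI allI impI)
  fix x y assume "x \<in> carrier L" "y \<in> carrier L"
  then obtain a s c t where xy: "a \<in> carrier A" "s \<in> S" "x = frac A S a s" "c \<in> carrier A" "t \<in> S" "y = frac A S c t"
    by (metis frac_cases)
  obtain p q where pq: "\<nu> s = Some p" "\<nu> t = Some q" using assms(2) xy by blast
  have "\<nu> (s \<otimes> t) = Some (p + q)" using pq vl_mult[OF assms(1)] xy S_carr by simp
  then show "loc_val \<nu> (x \<otimes>\<^bsub>L\<^esub> y) = vadd (loc_val \<nu> x) (loc_val \<nu> y)"
    using xy pq by (simp add: mult_frac loc_val_frac[OF assms] SS vl_mult[OF assms(1)] vsub_vadd)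
next
  fix x y c assume "x \<in> carrier L" "y \<in> carrier L" and h: "vle c (loc_val \<nu> x) \<and> vle c (loc_val \<nu> y)"
  then obtain a s b t where xy: "a \<in> carrier A" "s \<in> S" "x = frac A S a s" "b \<in> carrier A" "t \<in> S" "y = frac A S b t"
    by (metis frac_cases)
  obtain p q where pq: "\<nu> s = Some p" "\<nu> t = Some q" using assms(2) xy by blast
  have st: "\<nu> (s \<otimes> t) = Some (p + q)" using pq vl_mult[OF assms(1)] xy S_carr by simp
  have h1: "vle (vadd c (Some p)) (\<nu> a)" "vle (vadd c (Some q)) (\<nu> b)"
    using h xy pq by (simp_all add: loc_val_frac[OF assms] vle_vsub)
  have "vle (vadd (vadd c (Some p)) (Some q)) (vadd (\<nu> a) (Some q))" by (rule vadd_mono[OF h1(1)])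
  then have 1: "vle (vadd c (Some (p+q))) (\<nu> (a \<otimes> t))"
    using vl_mult[OF assms(1)] xy pq S_carr by (simp add: vadd_assoc)
  have "vle (vadd (vadd c (Some q)) (Some p)) (vadd (\<nu> b) (Some p))" by (rule vadd_mono[OF h1(2)])
  then have 2: "vle (vadd c (Some (p+q))) (\<nu> (b \<otimes> s))"
    using vl_mult[OF assms(1)] xy pq S_carr by (simp add: vadd_assoc add.commute)
  have "vle (vadd c (Some (p+q))) (\<nu> (a \<otimes> t \<oplus> b \<otimes> s))"
    using vl_add[OF assms(1) _ _ 1 2] xy S_carr by simp
  then show "vle c (loc_val \<nu> (x \<oplus>\<^bsub>L\<^esub> y))"
    using xy st by (simp add: add_frac loc_val_frac[OF assms] SS vle_vsub)
next
  show "loc_val \<nu> \<one>\<^bsub>L\<^esub> = Some 0" using vl_one[OF assms(1)]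
    by (simp add: one_L loc_val_frac[OF assms] SS)
  show "loc_val \<nu> \<zero>\<^bsub>L\<^esub> = None" using vl_zero[OF assms(1)] vl_one[OF assms(1)]
    by (simp add: zero_L loc_val_frac[OF assms] SS)
qed

end


lemma vless_simps[simp]: "vless (Some a) (Some b) \<longleftrightarrow> a < b" "vless x None \<longleftrightarrow> x \<noteq> None" "vless None y \<longleftrightarrow> False"
  by (auto simp: vless_def vle_def split: option.splits)

lemma vless_vadd_nonneg: "vle (Some 0) x \<Longrightarrow> vless c y \<Longrightarrow> vless c (vadd x y)"
  by (cases x; cases y; cases c) (auto, metis add_0 add_le_less_mono)

lemma (in cring) center1_ideal:
  assumes "vl R \<nu>" "\<forall>a\<in>carrier R. vle (Some 0) (\<nu> a)"
  shows "ideal (center1 R \<nu> \<Delta>) R"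
proof (rule my_idealI)
  show "center1 R \<nu> \<Delta> \<subseteq> carrier R" by (auto simp: center1_def)
  show "\<zero> \<in> center1 R \<nu> \<Delta>" using vl_zero[OF assms(1)] by (auto simp: center1_def)
  fix a b assume "a \<in> center1 R \<nu> \<Delta>" "b \<in> center1 R \<nu> \<Delta>"
  then show "a \<oplus> b \<in> center1 R \<nu> \<Delta>" using vl_addless[OF assms(1)] by (auto simp: center1_def)
next
  fix a assume "a \<in> center1 R \<nu> \<Delta>"
  then show "\<ominus> a \<in> center1 R \<nu> \<Delta>" using vl_neg[OF assms(1)] by (auto simp: center1_def)
next
  fix a x assume "a \<in> center1 R \<nu> \<Delta>" "x \<in> carrier R"
  then show "x \<otimes> a \<in> center1 R \<nu> \<Delta>" using vl_mult[OF assms(1)] assms(2)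
    by (auto simp: center1_def intro: vless_vadd_nonneg)
qed



theorem mainTheorem14:
  fixes R :: "('a, 'm) ring_scheme" and m :: "'a set"
    and \<nu> :: "'a \<Rightarrow> 'g::linordered_ab_group_add option"
    and \<Delta> :: "'g set" and y :: "nat \<Rightarrow> 'a" and r s :: nat and b :: 'a
  assumes "noetherian_ring R" and "local_ring R m"
    and "valuation R \<nu>" and "centered_on R m \<nu>"
    and "convex_subgroup \<Delta> (value_group R \<nu>)"
    and "associated_primes R = {nilradical R}"
    and "y ` {1..r+s} \<subseteq> carrier R"
    and "Idl\<^bsub>R\<^esub> (y ` {1..r+s}) = center1 R \<nu> \<Delta>"
    and "b \<in> carrier R" and "b \<notin> center1 R \<nu> \<Delta>"
  shows "Idl\<^bsub>blowup R \<nu> b (y ` {1..r})\<^esub>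
           ((\<lambda>i. if i \<le> r then blowup_incl R \<nu> b (y ` {1..r}) (frac R (powers R b) (y i) b)
                 else blowup_map R \<nu> b (y ` {1..r}) (y i)) ` {1..r+s})
         = center1 (blowup R \<nu> b (y ` {1..r})) (blowup_val \<nu>) \<Delta>"
proof -
  interpret R: cring R using assms(2) by (simp add: local_ring_def)
  have vlR: "vl R \<nu>" using assms(3) by (rule valuation_vl)
  have nnR: "\<forall>a\<in>carrier R. vle (Some 0) (\<nu> a)"
    using assms(4) by (simp add: centered_on_def has_center_def)
  have sgD: "0 \<in> \<Delta>" "\<And>x z. x \<in> \<Delta> \<Longrightarrow> z \<in> \<Delta> \<Longrightarrow> x - z \<in> \<Delta>"
    using assms(5) by (auto simp: convex_subgroup_def add_subgroup_def)
  have addD: "\<And>x z. x \<in> \<Delta> \<Longrightarrow> z \<in> \<Delta> \<Longrightarrow> x + z \<in> \<Delta>"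
  proof -
    fix x z assume "x \<in> \<Delta>" "z \<in> \<Delta>"
    then have "x - (0 - z) \<in> \<Delta>" using sgD by blast
    then show "x + z \<in> \<Delta>" by simp
  qed
  obtain \<beta> where \<beta>: "\<nu> b = Some \<beta>" "\<beta> \<in> \<Delta>"
  proof -
    obtain \<delta> where \<delta>: "\<delta> \<in> \<Delta>" "\<not> vless (Some \<delta>) (\<nu> b)"
      using assms(9,10) by (auto simp: center1_def)
    then obtain \<beta> where b1: "\<nu> b = Some \<beta>" by (cases "\<nu> b") auto
    have "\<beta> \<le> \<delta>" using \<delta>(2) b1 by simp
    moreover have "0 \<le> \<beta>" using nnR assms(9) b1 by auto
    moreover have "\<beta> \<in> value_group R \<nu>" using assms(9) b1 by (auto simp: value_group_def)
    ultimately have "\<beta> \<in> \<Delta>" using assms(5) \<delta>(1) by (auto simp: convex_subgroup_def)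
    then show ?thesis using that b1 by blast
  qed
  have ycen: "\<And>i. i \<in> {1..r+s} \<Longrightarrow> y i \<in> center1 R \<nu> \<Delta>"
    using R.genideal_self[OF assms(7)] assms(8) by auto
  have ycar: "\<And>i. i \<in> {1..r+s} \<Longrightarrow> y i \<in> carrier R" using assms(7) by auto
  define P where "P = powers R b"
  have bpow: "\<And>n. b [^]\<^bsub>R\<^esub> (n::nat) \<in> carrier R \<and> \<nu> (b [^]\<^bsub>R\<^esub> n) \<noteq> None"
  proof -
    fix n show "b [^]\<^bsub>R\<^esub> (n::nat) \<in> carrier R \<and> \<nu> (b [^]\<^bsub>R\<^esub> n) \<noteq> None"
      by (induction n) (auto simp: vl_one[OF vlR] vl_mult[OF vlR] assms(9) \<beta>)
  qed
  interpret M1: mset R P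
  proof
    show "P \<subseteq> carrier R" using bpow by (auto simp: P_def powers_def)
    show "\<one>\<^bsub>R\<^esub> \<in> P" unfolding P_def powers_def by (auto intro!: exI[of _ 0])
    fix u v assume "u \<in> P" "v \<in> P"
    then show "u \<otimes>\<^bsub>R\<^esub> v \<in> P" unfolding P_def powers_def
      using assms(9) by (auto simp: R.nat_pow_mult)
  qed
  have nuP: "\<forall>u\<in>P. \<nu> u \<noteq> None" using bpow by (auto simp: P_def powers_def)
  have bP: "b \<in> P" unfolding P_def powers_def using assms(9)
    by (auto intro!: exI[of _ 1])
  interpret L1: cring M1.L by (rule M1.L_cring)
  define \<nu>1 where "\<nu>1 = loc_val \<nu>"
  have vl1: "vl M1.L \<nu>1" unfolding \<nu>1_def by (rule M1.loc_vl[OF vlR nuP])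
  have val1: "\<And>a u. a \<in> carrier R \<Longrightarrow> u \<in> P \<Longrightarrow> \<nu>1 (frac R P a u) = vsub (\<nu> a) (\<nu> u)"
    unfolding \<nu>1_def by (rule M1.loc_val_frac[OF vlR nuP])
  define \<iota> where "\<iota> = (\<lambda>a. frac R P a \<one>\<^bsub>R\<^esub>)"
  have val1i: "\<And>a. a \<in> carrier R \<Longrightarrow> \<nu>1 (\<iota> a) = \<nu> a"
    using val1 M1.one_S vl_one[OF vlR] unfolding \<iota>_def by simp
  define Y0 where "Y0 = y ` {1..r}"
  define H where "H = \<iota> ` carrier R \<union> (\<lambda>a. frac R P a b) ` Y0"
  have Y0car: "Y0 \<subseteq> carrier R" using assms(7) unfolding Y0_def by auto
  have Hcar: "H \<subseteq> carrier M1.L" unfolding H_def \<iota>_def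
    using M1.frac_carrier M1.one_S bP Y0car by auto
  define G where "G = generate_ring M1.L H"
  have GL: "G \<subseteq> carrier M1.L" unfolding G_def by (rule L1.generate_ring_incl[OF Hcar])
  define R' where "R' = blowup_aff R b Y0"
  have R'_def2: "R' = M1.L\<lparr>carrier := G\<rparr>" unfolding R'_def blowup_aff_def G_def H_def \<iota>_def P_def by simp
  have R'c: "carrier R' = G" and R'm: "\<And>u v. u \<otimes>\<^bsub>R'\<^esub> v = u \<otimes>\<^bsub>M1.L\<^esub> v"
    and R'a: "\<And>u v. u \<oplus>\<^bsub>R'\<^esub> v = u \<oplus>\<^bsub>M1.L\<^esub> v" and R'1: "\<one>\<^bsub>R'\<^esub> = \<one>\<^bsub>M1.L\<^esub>"
    and R'0: "\<zero>\<^bsub>R'\<^esub> = \<zero>\<^bsub>M1.L\<^esub>"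
    by (simp_all add: R'_def2)
  have cringR': "cring R'" unfolding R'_def2
    using L1.subcring_iff[OF GL] L1.subcringI'[OF L1.generate_ring_is_subring[OF Hcar]] G_def by simp
  interpret R': cring R' by (rule cringR')
  have R'n: "\<And>u. u \<in> G \<Longrightarrow> \<ominus>\<^bsub>R'\<^esub> u = \<ominus>\<^bsub>M1.L\<^esub> u"
  proof -
    fix u assume u: "u \<in> G"
    have "\<ominus>\<^bsub>M1.L\<^esub> u \<in> G" using u unfolding G_def by (rule generate_ring.a_inv)
    moreover have "\<ominus>\<^bsub>M1.L\<^esub> u \<oplus>\<^bsub>M1.L\<^esub> u = \<zero>\<^bsub>M1.L\<^esub>" using u GL by (metis L1.l_neg subsetD)
    ultimately show "\<ominus>\<^bsub>R'\<^esub> u = \<ominus>\<^bsub>M1.L\<^esub> u" using u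
      by (intro R'.minus_equality) (simp_all add: R'c R'a R'0)
  qed
  have vl1': "vl R' \<nu>1" unfolding R'_def2 by (rule vl_subring[OF vl1 GL])
  have yb: "\<And>i. i \<in> {1..r} \<Longrightarrow> \<forall>\<delta>\<in>\<Delta>. vless (Some \<delta>) (\<nu>1 (frac R P (y i) b))"
  proof (intro ballI)
    fix i \<delta> assume i: "i \<in> {1..r}" and d: "\<delta> \<in> \<Delta>"
    have "vless (Some (\<delta> + \<beta>)) (\<nu> (y i))" using ycen[of i] i addD[OF d \<beta>(2)] by (auto simp: center1_def)
    then show "vless (Some \<delta>) (\<nu>1 (frac R P (y i) b))"
      using val1[OF ycar bP, of i] i \<beta>(1) by (simp add: vless_vsub)
  qed
  have nnG: "\<forall>u\<in>G. vle (Some 0) (\<nu>1 u)"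
  proof
    fix u assume "u \<in> G"
    then show "vle (Some 0) (\<nu>1 u)" unfolding G_def
    proof (induction u rule: generate_ring.induct)
      case one then show ?case using vl_one[OF vl1] by simp
    next
      case (incl h)
      then show ?case
      proof (cases "h \<in> \<iota> ` carrier R")
        case True then show ?thesis using val1i nnR by auto
      next
        case False
        then obtain i where i: "i \<in> {1..r}" "h = frac R P (y i) b" using incl unfolding H_def Y0_def by auto
        have "vless (Some 0) (\<nu>1 h)" using yb[OF i(1)] sgD(1) i(2) by blast
        then show ?thesis by (simp add: vless_def)
      qed
    next
      case (a_inv h) then show ?case
        using L1.vl_neg[OF vl1] L1.generate_ring_in_carrier[OF Hcar] by simp
    next
      case (eng_add h1 h2) then show ?case
        by (meson vl_add[OF vl1] L1.generate_ring_in_carrier[OF Hcar])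
    next
      case (eng_mult h1 h2) then show ?case
        using vl_mult[OF vl1] L1.generate_ring_in_carrier[OF Hcar]
        by (cases "\<nu>1 h1"; cases "\<nu>1 h2") auto
    qed
  qed
  define S2 where "S2 = carrier R' - center R' \<nu>1"
  have S2v: "\<And>g. g \<in> S2 \<Longrightarrow> \<nu>1 g = Some 0 \<and> g \<in> G"
  proof -
    fix g assume g: "g \<in> S2"
    then have "g \<in> G" "\<not> vless (Some 0) (\<nu>1 g)" by (auto simp: S2_def center_def R'c)
    moreover then have "vle (Some 0) (\<nu>1 g)" using nnG by blast
    ultimately show "\<nu>1 g = Some 0 \<and> g \<in> G" by (auto simp: vless_def)
  qed
  have oneG: "\<one>\<^bsub>M1.L\<^esub> \<in> G" unfolding G_def by (rule generate_ring.one)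
  have nu1one: "\<nu>1 \<one>\<^bsub>M1.L\<^esub> = Some 0" by (rule vl_one[OF vl1])
  interpret M2: mset R' S2
  proof
    show "S2 \<subseteq> carrier R'" by (auto simp: S2_def)
    show "\<one>\<^bsub>R'\<^esub> \<in> S2" using oneG nu1one by (auto simp: S2_def center_def R'c R'1)
    fix u v assume uv: "u \<in> S2" "v \<in> S2"
    then have "u \<otimes>\<^bsub>R'\<^esub> v \<in> carrier R'" using S2v R'c by auto
    moreover have "\<nu>1 (u \<otimes>\<^bsub>R'\<^esub> v) = Some 0" using uv S2v vl_mult[OF vl1'] R'c by simp
    ultimately show "u \<otimes>\<^bsub>R'\<^esub> v \<in> S2" by (auto simp: S2_def center_def)
  qed
  have nuS2: "\<forall>u\<in>S2. \<nu>1 u \<noteq> None" using S2v by auto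
  interpret L2: cring M2.L by (rule M2.L_cring)
  define \<nu>2 where "\<nu>2 = loc_val \<nu>1"
  have vl2: "vl M2.L \<nu>2" unfolding \<nu>2_def by (rule M2.loc_vl[OF vl1' nuS2])
  have val2: "\<And>u g. u \<in> G \<Longrightarrow> g \<in> S2 \<Longrightarrow> \<nu>2 (frac R' S2 u g) = \<nu>1 u"
    unfolding \<nu>2_def using M2.loc_val_frac[OF vl1' nuS2] S2v R'c by simp
  have nn2: "\<forall>x\<in>carrier M2.L. vle (Some 0) (\<nu>2 x)"
  proof
    fix x assume "x \<in> carrier M2.L"
    then obtain u g where "u \<in> carrier R'" "g \<in> S2" "x = frac R' S2 u g" by (rule M2.frac_cases)
    then show "vle (Some 0) (\<nu>2 x)" using val2 nnG R'c by auto
  qed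
  define incl where "incl = (\<lambda>x. frac R' S2 x \<one>\<^bsub>R'\<^esub>)"
  define f where "f = (\<lambda>i. if i \<le> r then frac R P (y i) b else \<iota> (y i))"
  have e1: "\<And>i. (if i \<le> r then blowup_incl R \<nu> b (y ` {1..r}) (frac R (powers R b) (y i) b)
                 else blowup_map R \<nu> b (y ` {1..r}) (y i)) = incl (f i)"
    unfolding blowup_incl_def blowup_map_def incl_def f_def \<iota>_def R'_def S2_def \<nu>1_def P_def Y0_def by simp
  have e2: "blowup R \<nu> b (y ` {1..r}) = M2.L" unfolding blowup_def R'_def S2_def \<nu>1_def Y0_def by simp
  have e3: "blowup_val \<nu> = \<nu>2" unfolding blowup_val_def \<nu>2_def \<nu>1_def ..
  have fG: "\<And>i. i \<in> {1..r+s} \<Longrightarrow> f i \<in> G"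
  proof -
    fix i assume i: "i \<in> {1..r+s}"
    have "f i \<in> H" using i ycar[OF i] unfolding f_def H_def Y0_def by auto
    then show "f i \<in> G" unfolding G_def by (rule generate_ring.incl)
  qed
  have fv: "\<And>i. i \<in> {1..r+s} \<Longrightarrow> \<forall>\<delta>\<in>\<Delta>. vless (Some \<delta>) (\<nu>1 (f i))"
    using yb ycen val1i ycar unfolding f_def by (auto simp: center1_def)
  have inclc: "\<And>u. u \<in> G \<Longrightarrow> incl u \<in> carrier M2.L"
    unfolding incl_def using M2.frac_carrier M2.one_S R'c by auto
  have inclv: "\<And>u. u \<in> G \<Longrightarrow> \<nu>2 (incl u) = \<nu>1 u"
    unfolding incl_def using val2 M2.one_S by auto
  define gens where "gens = (\<lambda>i. incl (f i)) ` {1..r+s}"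
  have gensc: "gens \<subseteq> carrier M2.L" unfolding gens_def using inclc fG by auto
  define C2 where "C2 = center1 M2.L \<nu>2 \<Delta>"
  have C2i: "ideal C2 M2.L" unfolding C2_def by (rule L2.center1_ideal[OF vl2 nn2])
  have gensC: "gens \<subseteq> C2" unfolding gens_def C2_def center1_def
    using inclc inclv fG fv by auto
  define Q where "Q = Idl\<^bsub>M2.L\<^esub> gens"
  have Qi: "ideal Q M2.L" unfolding Q_def by (rule L2.genideal_ideal[OF gensc])
  have sub1: "Q \<subseteq> C2" unfolding Q_def by (rule L2.genideal_minimal[OF C2i gensC])
  have cR: "cring R" by (rule R.is_cring)
  have iotaG: "\<And>a. a \<in> carrier R \<Longrightarrow> \<iota> a \<in> G"
    unfolding G_def H_def by (auto intro: generate_ring.incl)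
  have homi: "\<iota> \<in> ring_hom R R'"
  proof (rule ring_hom_memI)
    fix a assume "a \<in> carrier R" then show "\<iota> a \<in> carrier R'" using iotaG R'c by simp
  next
    fix a c assume "a \<in> carrier R" "c \<in> carrier R"
    then show "\<iota> (a \<otimes>\<^bsub>R\<^esub> c) = \<iota> a \<otimes>\<^bsub>R'\<^esub> \<iota> c"
      unfolding \<iota>_def R'm by (simp add: M1.mult_frac M1.one_S)
  next
    fix a c assume "a \<in> carrier R" "c \<in> carrier R"
    then show "\<iota> (a \<oplus>\<^bsub>R\<^esub> c) = \<iota> a \<oplus>\<^bsub>R'\<^esub> \<iota> c"
      unfolding \<iota>_def R'a by (simp add: M1.add_frac M1.one_S)
  next
    show "\<iota> \<one>\<^bsub>R\<^esub> = \<one>\<^bsub>R'\<^esub>" unfolding \<iota>_def R'1 M1.one_L ..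
  qed
  interpret hi: ring_hom_cring R R' \<iota>
    by (intro ring_hom_cring.intro ring_hom_cring_axioms.intro cR cringR' homi)
  have homincl: "incl \<in> ring_hom R' M2.L"
  proof (rule ring_hom_memI)
    fix a assume "a \<in> carrier R'" then show "incl a \<in> carrier M2.L" using inclc R'c by simp
  next
    fix a c assume "a \<in> carrier R'" "c \<in> carrier R'"
    then show "incl (a \<otimes>\<^bsub>R'\<^esub> c) = incl a \<otimes>\<^bsub>M2.L\<^esub> incl c"
      unfolding incl_def by (simp add: M2.mult_frac M2.one_S)
  next
    fix a c assume "a \<in> carrier R'" "c \<in> carrier R'"
    then show "incl (a \<oplus>\<^bsub>R'\<^esub> c) = incl a \<oplus>\<^bsub>M2.L\<^esub> incl c"
      unfolding incl_def by (simp add: M2.add_frac M2.one_S)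
  next
    show "incl \<one>\<^bsub>R'\<^esub> = \<one>\<^bsub>M2.L\<^esub>" unfolding incl_def M2.one_L ..
  qed
  interpret hincl: ring_hom_cring R' M2.L incl
    by (intro ring_hom_cring.intro ring_hom_cring_axioms.intro cringR' L2.is_cring homincl)
  define qQ where "qQ = {u \<in> carrier R'. incl u \<in> Q}"
  have qQi: "ideal qQ R'" unfolding qQ_def
    by (rule ring_hom_ring.ideal_vimage[OF ring_hom_ringI2[OF R'.ring_axioms L2.ring_axioms homincl] Qi])
  have qQs: "additive_subgroup qQ R'" using qQi by (simp add: ideal_def)
  have fq: "\<And>i. i \<in> {1..r+s} \<Longrightarrow> f i \<in> qQ"
    unfolding qQ_def using fG R'c L2.genideal_self[OF gensc] unfolding Q_def gens_def by auto
  have claimA: "\<And>u. u \<in> G \<Longrightarrow> \<exists>a\<in>carrier R. u \<ominus>\<^bsub>R'\<^esub> \<iota> a \<in> qQ"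
  proof -
    fix u assume "u \<in> G"
    then show "\<exists>a\<in>carrier R. u \<ominus>\<^bsub>R'\<^esub> \<iota> a \<in> qQ" unfolding G_def
    proof (induction u rule: generate_ring.induct)
      case one
      have "\<one>\<^bsub>M1.L\<^esub> \<ominus>\<^bsub>R'\<^esub> \<iota> \<one>\<^bsub>R\<^esub> = \<zero>\<^bsub>R'\<^esub>" unfolding R'1[symmetric] by simp
      then show ?case using additive_subgroup.zero_closed[OF qQs] by (metis R.one_closed)
    next
      case (incl h)
      show ?case
      proof (cases "h \<in> \<iota> ` carrier R")
        case True
        then obtain a where a: "a \<in> carrier R" "h = \<iota> a" by auto
        then have "h \<ominus>\<^bsub>R'\<^esub> \<iota> a = \<zero>\<^bsub>R'\<^esub>" by simp
        then show ?thesis using additive_subgroup.zero_closed[OF qQs] a by metis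
      next
        case False
        then obtain i where i: "i \<in> {1..r}" "h = frac R P (y i) b" using incl unfolding H_def Y0_def by auto
        then have "h = f i" unfolding f_def by simp
        then have "h \<in> qQ" "h \<in> carrier R'" using fq[of i] fG[of i] i R'c by auto
        then have "h \<ominus>\<^bsub>R'\<^esub> \<iota> \<zero>\<^bsub>R\<^esub> \<in> qQ" by (simp add: R'.minus_eq)
        then show ?thesis by blast
      qed
    next
      case (a_inv h)
      then obtain a where a: "a \<in> carrier R" "h \<ominus>\<^bsub>R'\<^esub> \<iota> a \<in> qQ" by blast
      have hG: "h \<in> G" using a_inv.hyps G_def by simp
      have c: "h \<in> carrier R'" "\<iota> a \<in> carrier R'" using hG R'c a by auto
      have "\<ominus>\<^bsub>R'\<^esub> h \<ominus>\<^bsub>R'\<^esub> \<iota> (\<ominus>\<^bsub>R\<^esub> a) = \<ominus>\<^bsub>R'\<^esub> (h \<ominus>\<^bsub>R'\<^esub> \<iota> a)"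
        using c a(1) by (simp only: hi.hom_a_inv) (use c in algebra)
      then have "\<ominus>\<^bsub>M1.L\<^esub> h \<ominus>\<^bsub>R'\<^esub> \<iota> (\<ominus>\<^bsub>R\<^esub> a) \<in> qQ"
        using additive_subgroup.a_inv_closed[OF qQs a(2)] R'n[OF hG] by simp
      then show ?case using a(1) by blast
    next
      case (eng_add h1 h2)
      then obtain a1 a2 where a: "a1 \<in> carrier R" "h1 \<ominus>\<^bsub>R'\<^esub> \<iota> a1 \<in> qQ" "a2 \<in> carrier R" "h2 \<ominus>\<^bsub>R'\<^esub> \<iota> a2 \<in> qQ" by blast
      have c: "h1 \<in> carrier R'" "h2 \<in> carrier R'" "\<iota> a1 \<in> carrier R'" "\<iota> a2 \<in> carrier R'"
        using eng_add.hyps G_def R'c a by auto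
      have "(h1 \<oplus>\<^bsub>R'\<^esub> h2) \<ominus>\<^bsub>R'\<^esub> \<iota> (a1 \<oplus>\<^bsub>R\<^esub> a2) = (h1 \<ominus>\<^bsub>R'\<^esub> \<iota> a1) \<oplus>\<^bsub>R'\<^esub> (h2 \<ominus>\<^bsub>R'\<^esub> \<iota> a2)"
        using c a(1,3) by (simp only: hi.hom_add) (use c in algebra)
      then have "(h1 \<oplus>\<^bsub>M1.L\<^esub> h2) \<ominus>\<^bsub>R'\<^esub> \<iota> (a1 \<oplus>\<^bsub>R\<^esub> a2) \<in> qQ"
        using additive_subgroup.a_closed[OF qQs a(2) a(4)] R'a by simp
      then show ?case using a(1,3) by blast
    next
      case (eng_mult h1 h2)
      then obtain a1 a2 where a: "a1 \<in> carrier R" "h1 \<ominus>\<^bsub>R'\<^esub> \<iota> a1 \<in> qQ" "a2 \<in> carrier R" "h2 \<ominus>\<^bsub>R'\<^esub> \<iota> a2 \<in> qQ" by blast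
      have c: "h1 \<in> carrier R'" "h2 \<in> carrier R'" "\<iota> a1 \<in> carrier R'" "\<iota> a2 \<in> carrier R'"
        using eng_mult.hyps G_def R'c a by auto
      have "(h1 \<otimes>\<^bsub>R'\<^esub> h2) \<ominus>\<^bsub>R'\<^esub> \<iota> (a1 \<otimes>\<^bsub>R\<^esub> a2) = h1 \<otimes>\<^bsub>R'\<^esub> (h2 \<ominus>\<^bsub>R'\<^esub> \<iota> a2) \<oplus>\<^bsub>R'\<^esub> \<iota> a2 \<otimes>\<^bsub>R'\<^esub> (h1 \<ominus>\<^bsub>R'\<^esub> \<iota> a1)"
        using c a(1,3) by (simp only: hi.hom_mult) (use c in algebra)
      moreover have "h1 \<otimes>\<^bsub>R'\<^esub> (h2 \<ominus>\<^bsub>R'\<^esub> \<iota> a2) \<in> qQ" "\<iota> a2 \<otimes>\<^bsub>R'\<^esub> (h1 \<ominus>\<^bsub>R'\<^esub> \<iota> a1) \<in> qQ"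
        using ideal.I_l_closed[OF qQi] a c by auto
      ultimately have "(h1 \<otimes>\<^bsub>M1.L\<^esub> h2) \<ominus>\<^bsub>R'\<^esub> \<iota> (a1 \<otimes>\<^bsub>R\<^esub> a2) \<in> qQ"
        using additive_subgroup.a_closed[OF qQs] R'm by simp
      then show ?case using a(1,3) by blast
    qed
  qed
  have C1i: "ideal (center1 R' \<nu>1 \<Delta>) R'" by (rule R'.center1_ideal[OF vl1']) (use nnG R'c in simp)
  have C1s: "additive_subgroup (center1 R' \<nu>1 \<Delta>) R'" using C1i by (simp add: ideal_def)
  have claimB: "qQ \<subseteq> center1 R' \<nu>1 \<Delta>"
  proof
    fix u assume "u \<in> qQ"
    then have u: "u \<in> G" "incl u \<in> C2" using sub1 by (auto simp: qQ_def R'c)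
    then show "u \<in> center1 R' \<nu>1 \<Delta>" using inclv[OF u(1)] R'c by (auto simp: C2_def center1_def)
  qed
  have claimC: "center1 R \<nu> \<Delta> \<subseteq> {a \<in> carrier R. \<iota> a \<in> qQ}"
  proof -
    have "ideal {a \<in> carrier R. \<iota> a \<in> qQ} R"
      by (rule ring_hom_ring.ideal_vimage[OF ring_hom_ringI2[OF R.ring_axioms R'.ring_axioms homi] qQi])
    moreover have "y ` {1..r+s} \<subseteq> {a \<in> carrier R. \<iota> a \<in> qQ}"
    proof
      fix z assume "z \<in> y ` {1..r+s}"
      then obtain j where j: "j \<in> {1..r+s}" "z = y j" by auto
      show "z \<in> {a \<in> carrier R. \<iota> a \<in> qQ}"
      proof (cases "j \<le> r")
        case True
        have "\<iota> b \<otimes>\<^bsub>R'\<^esub> f j = frac R P (b \<otimes>\<^bsub>R\<^esub> y j) (\<one>\<^bsub>R\<^esub> \<otimes>\<^bsub>R\<^esub> b)"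
          unfolding R'm \<iota>_def f_def using True M1.mult_frac[OF assms(9) M1.one_S ycar[OF j(1)] bP] by simp
        also have "\<dots> = \<iota> (y j)" unfolding \<iota>_def
          using ycar[OF j(1)] assms(9) bP M1.one_S by (intro M1.frac_eqI) (simp_all add: R.m_ac)
        finally have "\<iota> (y j) = \<iota> b \<otimes>\<^bsub>R'\<^esub> f j" ..
        moreover have "\<iota> b \<otimes>\<^bsub>R'\<^esub> f j \<in> qQ"
          using ideal.I_l_closed[OF qQi fq[OF j(1)]] iotaG[OF assms(9)] R'c by simp
        ultimately show ?thesis using j ycar by simp
      next
        case False
        then show ?thesis using j ycar fq[OF j(1)] unfolding f_def by simp
      qed
    qed
    ultimately show ?thesis using R.genideal_minimal assms(8) by metis
  qed
  have sub2: "C2 \<subseteq> Q"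
  proof
    fix x assume x: "x \<in> C2"
    then have "x \<in> carrier M2.L" by (simp add: C2_def center1_def)
    then obtain u g where ug: "u \<in> carrier R'" "g \<in> S2" "x = frac R' S2 u g" by (rule M2.frac_cases)
    have uG: "u \<in> G" using ug R'c by simp
    have uc: "u \<in> center1 R' \<nu>1 \<Delta>" using x ug val2[OF uG ug(2)] by (auto simp: C2_def center1_def)
    obtain a where a: "a \<in> carrier R" "u \<ominus>\<^bsub>R'\<^esub> \<iota> a \<in> qQ" using claimA[OF uG] by blast
    have ia: "\<iota> a \<in> carrier R'" using a iotaG R'c by simp
    have "\<iota> a = u \<oplus>\<^bsub>R'\<^esub> \<ominus>\<^bsub>R'\<^esub> (u \<ominus>\<^bsub>R'\<^esub> \<iota> a)" using ia ug by algebra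
    moreover have "u \<oplus>\<^bsub>R'\<^esub> \<ominus>\<^bsub>R'\<^esub> (u \<ominus>\<^bsub>R'\<^esub> \<iota> a) \<in> center1 R' \<nu>1 \<Delta>"
      using a(2) claimB uc additive_subgroup.a_closed[OF C1s] additive_subgroup.a_inv_closed[OF C1s] by blast
    ultimately have "\<iota> a \<in> center1 R' \<nu>1 \<Delta>" by simp
    then have "a \<in> center1 R \<nu> \<Delta>" using val1i[OF a(1)] a(1) by (simp add: center1_def)
    then have "\<iota> a \<in> qQ" using claimC by auto
    moreover have "u = (u \<ominus>\<^bsub>R'\<^esub> \<iota> a) \<oplus>\<^bsub>R'\<^esub> \<iota> a" using ia ug by algebra
    ultimately have "u \<in> qQ" using additive_subgroup.a_closed[OF qQs a(2)] by metis
    then have iu: "incl u \<in> Q" by (simp add: qQ_def)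
    have "x = incl u \<otimes>\<^bsub>M2.L\<^esub> frac R' S2 \<one>\<^bsub>R'\<^esub> g"
      unfolding incl_def ug(3) using ug M2.one_S M2.S_carr by (simp add: M2.mult_frac)
    moreover have "frac R' S2 \<one>\<^bsub>R'\<^esub> g \<in> carrier M2.L" using ug(2) by (simp add: M2.frac_carrier)
    ultimately show "x \<in> Q" using ideal.I_r_closed[OF Qi iu] by simp
  qed
  have "Q = C2" using sub1 sub2 by blast
  then show ?thesis unfolding e1 e2 e3 Q_def C2_def gens_def .
qed


end
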